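(* Let $k,t\ge0$ be integers. Then for every $\theta\in\mathbb{R}$, \[ \Big|\frac{d^k}{d\theta^k}P_t(e^{i\theta})\Big|,\ \Big|\frac{d^k}{d\theta^k}Q_t(e^{i\theta})\Big|\le 2^{kt+(t+1)/2}. \] In particular, with $T=2^{t+10}$ and $\alpha,\beta$ as in the context, $|\alpha^{(k)}(x)|,|\beta^{(k)}(x)|\le 2^{-10k}$ for every integer $k\ge1$ and every $x\in\mathbb{R}$.
   Context: Rudin–Shapiro polynomials: $P_0(z)=Q_0(z)=1$ and for $s\ge0$, $P_{s+1}(z)=P_s(z)+z^{2^s}Q_s(z)$, $Q_{s+1}(z)=P_s(z)-z^{2^s}Q_s(z)$. For the integer $t$, set $T:=2^{t+10}$ and for $x\in\mathbb{R}$ define $\alpha(x):=2^{-(t+1)/2}P_t(e^{ix/T})$ and $\beta(x):=2^{-(t+1)/2}Q_t(e^{ix/T})$. *)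

theory Defs
  imports "HOL-Analysis.Analysis"
begin

fun RSP :: "nat \<Rightarrow> complex \<Rightarrow> complex" and RSQ :: "nat \<Rightarrow> complex \<Rightarrow> complex" where
  "RSP 0 z = 1"
| "RSQ 0 z = 1"
| "RSP (Suc s) z = RSP s z + z ^ (2 ^ s) * RSQ s z"
| "RSQ (Suc s) z = RSP s z - z ^ (2 ^ s) * RSQ s z"

definition rderiv_iter :: "nat \<Rightarrow> (real \<Rightarrow> complex) \<Rightarrow> real \<Rightarrow> complex" where
  "rderiv_iter k f = ((\<lambda>g x. vector_derivative g (at x)) ^^ k) f"

definition RS_T :: "nat \<Rightarrow> real" where
  "RS_T t = 2 ^ (t + 10)"

definition RS_alpha :: "nat \<Rightarrow> real \<Rightarrow> complex" where
  "RS_alpha t x = complex_of_real (2 powr (- (real t + 1) / 2)) * RSP t (exp (\<i> * complex_of_real (x / RS_T t)))"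

definition RS_beta :: "nat \<Rightarrow> real \<Rightarrow> complex" where
  "RS_beta t x = complex_of_real (2 powr (- (real t + 1) / 2)) * RSQ t (exp (\<i> * complex_of_real (x / RS_T t)))"

end

theory Submission
  imports Defs
begin


definition ES :: "nat set \<Rightarrow> (nat \<Rightarrow> complex) \<Rightarrow> (nat \<Rightarrow> real) \<Rightarrow> real \<Rightarrow> complex" where
  "ES A c w \<theta> = (\<Sum>n\<in>A. c n * exp (\<i> * of_real (w n) * of_real \<theta>))"

lemma term_deriv:
  "((\<lambda>\<theta>. c * exp (\<i> * of_real w * of_real \<theta>)) has_vector_derivative
     (c * (\<i> * of_real w) * exp (\<i> * of_real w * of_real \<theta>))) (at \<theta>)"
proof -
  have "((\<lambda>z. c * exp (\<i> * of_real w * z)) has_field_derivative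
     (c * (\<i> * of_real w) * exp (\<i> * of_real w * of_real \<theta>))) (at (of_real \<theta>))"
    by (auto intro!: derivative_eq_intros)
  from has_vector_derivative_real_field[OF this] show ?thesis by simp
qed

lemma ES_deriv: "(ES A c w has_vector_derivative ES A (\<lambda>n. c n * (\<i> * of_real (w n))) w \<theta>) (at \<theta>)"
  unfolding ES_def
  by (rule has_vector_derivative_sum) (rule term_deriv)

lemma rderiv_iter_Suc: "rderiv_iter (Suc k) f = (\<lambda>x. vector_derivative (rderiv_iter k f) (at x))"
  by (simp add: rderiv_iter_def)

lemma rderiv_ES: "rderiv_iter k (ES A c w) = ES A (\<lambda>n. c n * (\<i> * of_real (w n))^k) w"
proof (induction k)
  case 0 then show ?case by (simp add: rderiv_iter_def)
next
  case (Suc k)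
  show ?case unfolding rderiv_iter_Suc Suc
    by (rule ext, rule vector_derivative_at) (rule ES_deriv[THEN has_vector_derivative_eq_rhs], simp add: ES_def mult_ac)
qed

fun pa :: "nat \<Rightarrow> nat \<Rightarrow> complex" and qa :: "nat \<Rightarrow> nat \<Rightarrow> complex" where
  "pa 0 n = (if n = 0 then 1 else 0)"
| "qa 0 n = (if n = 0 then 1 else 0)"
| "pa (Suc s) n = (if n < 2^s then pa s n else qa s (n - 2^s))"
| "qa (Suc s) n = (if n < 2^s then pa s n else - qa s (n - 2^s))"

lemma sum_split_add: "(\<Sum>n<a+(b::nat). f n) = (\<Sum>n<a. f n) + (\<Sum>n<b. f (a + n))"
  by (induction b) (auto simp: add_ac)

lemma pow2_Suc_split: "(2::nat) ^ Suc s = 2^s + 2^s" by simp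

lemma RS_sum: "RSP t z = (\<Sum>n<2^t. pa t n * z^n) \<and> RSQ t z = (\<Sum>n<2^t. qa t n * z^n)"
proof (induction t)
  case 0 then show ?case by simp
next
  case (Suc s)
  have e: "\<And>n. z ^ (2^s + n) = z^(2^s) * z^n" by (simp add: power_add)
  show ?case unfolding pow2_Suc_split sum_split_add
    using Suc by (simp add: e sum_distrib_left sum_negf mult_ac)
qed

definition FF :: "nat \<Rightarrow> nat \<Rightarrow> real \<Rightarrow> complex" where
  "FF t k \<theta> = (\<Sum>n<2^t. pa t n * (\<i> * of_nat n)^k * exp (\<i> * of_nat n * of_real \<theta>))"
definition GG :: "nat \<Rightarrow> nat \<Rightarrow> real \<Rightarrow> complex" where
  "GG t k \<theta> = (\<Sum>n<2^t. qa t n * (\<i> * of_nat n)^k * exp (\<i> * of_nat n * of_real \<theta>))"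

definition HH :: "nat \<Rightarrow> nat \<Rightarrow> real \<Rightarrow> complex" where
  "HH t k \<theta> = exp (\<i> * of_nat (2^t) * of_real \<theta>) *
     (\<Sum>j\<le>k. of_nat (k choose j) * (\<i> * of_nat (2^t))^(k-j) * GG t j \<theta>)"

lemma HH_alt: "HH t k \<theta> = (\<Sum>n<2^t. qa t n * (\<i> * of_nat (2^t + n))^k * exp (\<i> * of_nat (2^t + n) * of_real \<theta>))"
proof -
  let ?N = "\<i> * of_nat (2^t) :: complex"
  have b: "(\<i> * of_nat (2^t + n))^k = (\<Sum>j\<le>k. of_nat (k choose j) * (\<i> * of_nat n)^j * ?N^(k-j))" for n
    by (subst binomial_ring[symmetric]) (simp add: algebra_simps)
  have e: "exp (\<i> * of_nat (2^t + n) * of_real \<theta>) = exp (?N * of_real \<theta>) * exp (\<i> * of_nat n * of_real \<theta>)" for n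
    by (simp add: exp_add[symmetric] algebra_simps)
  show ?thesis
    unfolding HH_def GG_def b e sum_distrib_left sum_distrib_right
    by (subst sum.swap) (auto intro!: sum.cong simp: mult_ac)
qed

lemma FF_Suc: "FF (Suc t) k \<theta> = FF t k \<theta> + HH t k \<theta>"
  unfolding FF_def HH_alt pow2_Suc_split sum_split_add by simp

lemma GG_Suc: "GG (Suc t) k \<theta> = FF t k \<theta> - HH t k \<theta>"
  unfolding FF_def GG_def HH_alt pow2_Suc_split sum_split_add by (simp add: sum_negf)


lemma parallelogram_c: "(cmod (x + y))^2 + (cmod (x - y))^2 = 2 * ((cmod x)^2 + (cmod y)^2)"
  unfolding cmod_power2 by (simp add: power2_eq_square algebra_simps)

lemma key_ineq:
  fixes a b h r M :: real and K :: real
  assumes "a^2 + b^2 \<le> M^2" "0 \<le> b" "0 \<le> r" "0 \<le> M" "0 \<le> h" "h \<le> b + r" "r \<le> (K - 1) * M"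
  shows "2 * (a^2 + h^2) \<le> 2 * (K * M)^2"
proof -
  have "b^2 \<le> M^2" using assms(1) zero_le_power2[of a] by linarith
  then have "b \<le> M" by (rule power2_le_imp_le) (use assms in auto)
  have "h^2 \<le> (b + r)^2" by (rule power_mono) (use assms in auto)
  also have "(b+r)^2 = b^2 + 2*b*r + r^2" by (simp add: power2_eq_square algebra_simps)
  finally have 1: "h^2 \<le> b^2 + 2*b*r + r^2" .
  have 2: "2*b*r \<le> 2*M*r" using mult_right_mono[OF \<open>b \<le> M\<close> \<open>0 \<le> r\<close>] by simp
  have "M + r \<le> K*M" using assms(7) by (simp add: left_diff_distrib)
  then have 3: "(M + r)^2 \<le> (K * M)^2" by (rule power_mono) (use assms in auto)
  have 4: "(M + r)^2 = M^2 + 2*M*r + r^2" by (simp add: power2_eq_square algebra_simps)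
  have "a^2 + h^2 \<le> (K * M)^2" using 1 2 3 4 assms(1) by linarith
  then show ?thesis by simp
qed

lemma L1: "s^2 = 2^(t+1) \<Longrightarrow> 2 * (2^k * (((2::real)^t)^k * s))^2 = ((2::real)^Suc t)^(2*k) * 2^(Suc t + 1)"
proof -
  assume ss: "s^2 = 2^(t+1)"
  have "2 * (2^k * (((2::real)^t)^k * s))^2 = 2 * (2^k)^2 * ((2^t)^k)^2 * s^2"
    by (simp only: power_mult_distrib mult.assoc)
  also have "\<dots> = (2::real)^(1 + 2*k + 2*t*k + (t+1))"
    unfolding ss by (simp only: power_add flip: power_mult) (simp add: mult_ac)
  also have "\<dots> = ((2::real)^Suc t)^(2*k) * 2^(Suc t + 1)"
    by (simp only: power_add flip: power_mult) (simp add: mult_ac power_add)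
  finally show ?thesis .
qed

lemma main_bound: "\<forall>k \<theta>. (cmod (FF t k \<theta>))^2 + (cmod (GG t k \<theta>))^2 \<le> ((2::real)^t)^(2*k) * 2^(t+1)"
proof (induction t)
  case 0
  show ?case by (auto simp: FF_def GG_def power_0_left)
next
  case (Suc t)
  show ?case
  proof (intro allI)
    fix k \<theta>
    define N :: real where "N = 2^t"
    define s :: real where "s = sqrt (2^(t+1))"
    have N0: "N > 0" and s0: "s \<ge> 0" by (auto simp: N_def s_def)
    have ss: "s^2 = 2^(t+1)" by (simp add: s_def)
    have eqM: "(N^j * s)^2 = ((2::real)^t)^(2*j) * 2^(t+1)" for j
      unfolding N_def using ss by (simp add: power_mult_distrib flip: power_mult)
    have Gb: "cmod (GG t j \<theta>) \<le> N^j * s" for j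
    proof -
      have "(cmod (GG t j \<theta>))^2 \<le> (N^j * s)^2"
        using spec[OF spec[OF Suc.IH, of j], of \<theta>] unfolding eqM
        using zero_le_power2[of "cmod (FF t j \<theta>)"] by linarith
      then show ?thesis by (rule power2_le_imp_le) (use N0 s0 in auto)
    qed
    have Fb: "(cmod (FF t k \<theta>))^2 + (cmod (GG t k \<theta>))^2 \<le> (N^k * s)^2"
      using spec[OF spec[OF Suc.IH, of k], of \<theta>] unfolding eqM .
    define R where "R = (\<Sum>j<k. of_nat (k choose j) * (\<i> * of_nat (2^t))^(k-j) * GG t j \<theta>)"
    have HHe: "HH t k \<theta> = exp (\<i> * of_nat (2^t) * of_real \<theta>) * (GG t k \<theta> + R)"
    proof -
      have sp: "(\<Sum>j\<le>k. f j) = f k + (\<Sum>j<k. f j)" for f :: "nat \<Rightarrow> complex"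
        by (metis lessThan_Suc_atMost sum.lessThan_Suc add.commute)
      show ?thesis unfolding HH_def R_def sp by simp
    qed
    have nexp: "cmod (exp (\<i> * of_nat (2^t) * of_real \<theta>)) = 1"
      by (metis norm_exp_i_times of_real_mult of_real_of_nat_eq mult.assoc)
    have hb: "cmod (HH t k \<theta>) \<le> cmod (GG t k \<theta>) + cmod R"
      unfolding HHe norm_mult nexp by (simp add: norm_triangle_ineq)
    have tb: "cmod (of_nat (k choose j) * (\<i> * of_nat (2^t))^(k-j) * GG t j \<theta>) \<le> real (k choose j) * N^(k-j) * (N^j * s)" for j
    proof -
      have "cmod (of_nat (k choose j) * (\<i> * of_nat (2^t))^(k-j) * GG t j \<theta>) = real (k choose j) * N^(k-j) * cmod (GG t j \<theta>)"
        by (simp add: norm_mult norm_power N_def)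
      also have "\<dots> \<le> real (k choose j) * N^(k-j) * (N^j * s)"
        by (rule mult_left_mono[OF Gb]) (simp add: N_def)
      finally show ?thesis .
    qed
    have "cmod R \<le> (\<Sum>j<k. real (k choose j) * N^(k-j) * (N^j * s))"
      unfolding R_def by (rule order_trans[OF norm_sum sum_mono]) (rule tb)
    also have "\<dots> = (\<Sum>j<k. real (k choose j) * (N^k * s))"
    proof (rule sum.cong)
      fix j assume "j \<in> {..<k}"
      then have "N^(k-j) * N^j = N^k" by (simp flip: power_add)
      then show "real (k choose j) * N^(k-j) * (N^j * s) = real (k choose j) * (N^k * s)"
        by (metis mult.assoc)
    qed simp
    also have "\<dots> = (\<Sum>j<k. real (k choose j)) * N^k * s"
      by (simp add: sum_distrib_right mult.assoc)
    also have "(\<Sum>j<k. real (k choose j)) = 2^k - 1"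
    proof -
      have "(\<Sum>j\<le>k. real (k choose j)) = 2^k" using choose_row_sum[of k]
        by (metis of_nat_numeral of_nat_power of_nat_sum)
      then show ?thesis by (simp flip: lessThan_Suc_atMost)
    qed
    finally have rb: "cmod R \<le> (2^k - 1) * (N^k * s)" by simp
    have "2 * ((cmod (FF t k \<theta>))^2 + (cmod (HH t k \<theta>))^2) \<le> 2 * (2^k * (N^k * s))^2"
      by (rule key_ineq[OF Fb _ _ _ _ hb rb]) (use N0 s0 in auto)
    also have "2 * (2^k * (N^k * s))^2 = ((2::real)^Suc t)^(2*k) * 2^(Suc t + 1)"
      unfolding N_def by (rule L1[OF ss])
    finally show "(cmod (FF (Suc t) k \<theta>))^2 + (cmod (GG (Suc t) k \<theta>))^2 \<le> ((2::real)^Suc t)^(2*k) * 2^(Suc t + 1)"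
      unfolding FF_Suc GG_Suc parallelogram_c .
  qed
qed



lemma powr_sq: "(2 powr (real k * real t + (real t + 1)/2))^2 = ((2::real)^t)^(2*k) * 2^(t+1)"
proof -
  have "(2 powr (real k * real t + (real t + 1)/2))^2 = (2::real) powr (of_nat 2 * (real k * real t + (real t + 1)/2))"
    by (rule powr_power) simp
  also have "of_nat 2 * (real k * real t + (real t + 1)/2) = real (2*k*t + t + 1)" by (simp add: algebra_simps)
  also have "(2::real) powr real (2*k*t + t + 1) = 2^(2*k*t + t + 1)" by (rule powr_realpow) simp
  also have "\<dots> = ((2::real)^t)^(2*k) * 2^(t+1)" by (simp add: power_add flip: power_mult)
  finally show ?thesis .
qed

lemma FG_bound: "cmod (FF t k \<theta>) \<le> 2 powr (real k * real t + (real t + 1)/2) \<and> cmod (GG t k \<theta>) \<le> 2 powr (real k * real t + (real t + 1)/2)"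
proof -
  have m: "(cmod (FF t k \<theta>))^2 + (cmod (GG t k \<theta>))^2 \<le> (2 powr (real k * real t + (real t + 1)/2))^2"
    using main_bound[of t] unfolding powr_sq by blast
  have "(cmod (FF t k \<theta>))^2 \<le> (2 powr (real k * real t + (real t + 1)/2))^2"
    using m zero_le_power2[of "cmod (GG t k \<theta>)"] by linarith
  moreover have "(cmod (GG t k \<theta>))^2 \<le> (2 powr (real k * real t + (real t + 1)/2))^2"
    using m zero_le_power2[of "cmod (FF t k \<theta>)"] by linarith
  ultimately show ?thesis by (auto elim!: power2_le_imp_le)
qed

lemma RSP_ES: "(\<lambda>\<theta>. RSP t (exp (\<i> * complex_of_real \<theta>))) = ES {..<2^t} (pa t) real"
  and RSQ_ES: "(\<lambda>\<theta>. RSQ t (exp (\<i> * complex_of_real \<theta>))) = ES {..<2^t} (qa t) real"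
  by (auto simp: RS_sum ES_def exp_of_nat_mult[symmetric] mult_ac)

lemma FF_ES: "ES {..<2^t} (\<lambda>n. pa t n * (\<i> * of_real (real n))^k) real \<theta> = FF t k \<theta>"
  and GG_ES: "ES {..<2^t} (\<lambda>n. qa t n * (\<i> * of_real (real n))^k) real \<theta> = GG t k \<theta>"
  by (simp_all add: ES_def FF_def GG_def)

lemma T_pos: "RS_T t > 0" by (simp add: RS_T_def)

lemma alpha_ES: "RS_alpha t = ES {..<2^t} (\<lambda>n. complex_of_real (2 powr (- (real t + 1) / 2)) * pa t n) (\<lambda>n. real n / RS_T t)"
  and beta_ES: "RS_beta t = ES {..<2^t} (\<lambda>n. complex_of_real (2 powr (- (real t + 1) / 2)) * qa t n) (\<lambda>n. real n / RS_T t)"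
  by (auto simp: RS_alpha_def RS_beta_def RS_sum ES_def exp_of_nat_mult[symmetric] sum_distrib_left mult_ac)

lemma scaled: "ES A (\<lambda>n. C * c n * (\<i> * of_real (real n / T))^k) (\<lambda>n. real n / T) x
   = C * of_real ((1/T)^k) * (\<Sum>n\<in>A. c n * (\<i> * of_nat n)^k * exp (\<i> * of_nat n * of_real (x / T)))"
  unfolding ES_def sum_distrib_left
  by (rule sum.cong) (simp_all add: power_mult_distrib power_divide mult_ac)

lemma const_eq: "2 powr (- (real t + 1) / 2) * (1 / RS_T t)^k * 2 powr (real k * real t + (real t + 1)/2) = 2 powr (- 10 * real k)"
proof -
  have q: "(1 / RS_T t)^k = 2 powr (- (real k * (real t + 10)))"
  proof -
    have "(1 / RS_T t)^k = inverse ((2::real)^((t+10)*k))" by (simp add: RS_T_def power_mult power_one_over divide_inverse power_inverse)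
    also have "(2::real)^((t+10)*k) = 2 powr real ((t+10)*k)" by (rule powr_realpow[symmetric]) simp
    also have "inverse \<dots> = 2 powr (- real ((t+10)*k))" by (simp add: powr_minus)
    finally show ?thesis by (simp add: algebra_simps)
  qed
  have "2 powr (- (real t + 1) / 2) * (1 / RS_T t)^k * 2 powr (real k * real t + (real t + 1)/2)
     = 2 powr (- (real t + 1) / 2 + - (real k * (real t + 10)) + (real k * real t + (real t + 1)/2))"
    unfolding q powr_add by (simp only: mult.assoc)
  also have "- (real t + 1) / 2 + - (real k * (real t + 10)) + (real k * real t + (real t + 1)/2) = - 10 * real k"
    by (simp add: field_simps)
  finally show ?thesis .
qed


lemma scaled_bound:
  assumes "cmod Z \<le> 2 powr (real k * real t + (real t + 1)/2)"
  shows "cmod (complex_of_real (2 powr (- (real t + 1) / 2)) * of_real ((1 / RS_T t)^k) * Z) \<le> 2 powr (- 10 * real k)"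
proof -
  have "cmod (complex_of_real (2 powr (- (real t + 1) / 2)) * of_real ((1 / RS_T t)^k) * Z)
      = 2 powr (- (real t + 1) / 2) * (1 / RS_T t)^k * cmod Z"
    using T_pos[of t] by (simp add: norm_mult norm_power norm_divide)
  also have "\<dots> \<le> 2 powr (- (real t + 1) / 2) * (1 / RS_T t)^k * 2 powr (real k * real t + (real t + 1)/2)"
    by (rule mult_left_mono[OF assms]) (use T_pos[of t] in simp)
  finally show ?thesis unfolding const_eq .
qed

theorem lemma3p6:
  fixes k t :: nat
  shows "(\<forall>\<theta>::real.
           norm (rderiv_iter k (\<lambda>\<theta>. RSP t (exp (\<i> * complex_of_real \<theta>))) \<theta>)
             \<le> 2 powr (real k * real t + (real t + 1) / 2)
         \<and> norm (rderiv_iter k (\<lambda>\<theta>. RSQ t (exp (\<i> * complex_of_real \<theta>))) \<theta>)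
             \<le> 2 powr (real k * real t + (real t + 1) / 2))
       \<and> (k \<ge> 1 \<longrightarrow> (\<forall>x::real.
           norm (rderiv_iter k (RS_alpha t) x) \<le> 2 powr (- 10 * real k)
         \<and> norm (rderiv_iter k (RS_beta t) x) \<le> 2 powr (- 10 * real k)))"
proof (intro conjI allI impI)
  fix \<theta> :: real
  show "norm (rderiv_iter k (\<lambda>\<theta>. RSP t (exp (\<i> * complex_of_real \<theta>))) \<theta>)
             \<le> 2 powr (real k * real t + (real t + 1) / 2)"
    unfolding RSP_ES rderiv_ES FF_ES using FG_bound by blast
  show "norm (rderiv_iter k (\<lambda>\<theta>. RSQ t (exp (\<i> * complex_of_real \<theta>))) \<theta>)
             \<le> 2 powr (real k * real t + (real t + 1) / 2)"
    unfolding RSQ_ES rderiv_ES GG_ES using FG_bound by blast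
next
  fix x :: real
  show "norm (rderiv_iter k (RS_alpha t) x) \<le> 2 powr (- 10 * real k)"
    unfolding alpha_ES rderiv_ES scaled FF_def[symmetric]
    by (rule scaled_bound) (use FG_bound in blast)
  show "norm (rderiv_iter k (RS_beta t) x) \<le> 2 powr (- 10 * real k)"
    unfolding beta_ES rderiv_ES scaled GG_def[symmetric]
    by (rule scaled_bound) (use FG_bound in blast)
qed

end
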